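(* Let $g(x)=\dfrac{1}{1-\cos(x)}$ for $x\in(0,2\pi)$. (i) Let $n\ge0$ be an even integer. For all $x,y>0$ with $x+y\le\pi$, $$\lambda_n\le g^{(n)}(x)+g^{(n)}(y)-g^{(n)}(x+y),\qquad \lambda_n=\frac{2}{n+2}\,(2^{n+2}-1)^2\,|B_{n+2}|,$$ and $\lambda_n$ is the best possible lower bound (i.e., the largest constant, depending only on $n$, for which the inequality holds for all such $x,y$). (ii) Let $n\ge1$ be an odd integer. For all $x,y>0$ with $x+y\le\pi$, $$\mu_n\le g^{(n)}(x+y)-g^{(n)}(x)-g^{(n)}(y),\qquad \mu_n=2\,|E_{n+1}|,$$ and $\mu_n$ is the best possible lower bound (i.e., the largest constant, depending only on $n$, for which the inequality holds for all such $x,y$).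
   Context: $B_m$ denotes the $m$-th Bernoulli number (defined by $\frac{t}{e^t-1}=\sum_{m\ge0}B_m\frac{t^m}{m!}$) and $E_m$ denotes the $m$-th Euler number (defined by $\frac{1}{\cosh t}=\sum_{m\ge0}E_m\frac{t^m}{m!}$). *)

theory Defs
  imports "HOL-Analysis.Analysis" "HOL-Computational_Algebra.Formal_Power_Series"
begin

definition bernoulli_num :: "nat \<Rightarrow> real" where
  "bernoulli_num m = fact m * fps_nth (fps_X / (fps_exp 1 - 1)) m"

definition fps_cosh_real :: "real fps" where
  "fps_cosh_real = fps_const (1/2) * (fps_exp 1 + fps_exp (-1))"

definition euler_num :: "nat \<Rightarrow> real" where
  "euler_num m = fact m * fps_nth (inverse fps_cosh_real) m"

definition g_fun :: "real \<Rightarrow> real" where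
  "g_fun x = 1 / (1 - cos x)"

end

theory Submission
  imports Defs "HOL-Computational_Algebra.Polynomial"
begin


definition sc :: "'a::comm_ring_1 \<Rightarrow> 'a fps \<Rightarrow> 'a fps" where
  "sc c F = Abs_fps (\<lambda>n. c^n * fps_nth F n)"

lemma sc_nth[simp]: "fps_nth (sc c F) n = c^n * fps_nth F n"
  by (simp add: sc_def)

lemma sc_mult: "sc c (F * G) = sc c F * sc c G"
proof (rule fps_ext)
  fix n
  have "fps_nth (sc c (F * G)) n = (\<Sum>i=0..n. c^n * (fps_nth F i * fps_nth G (n - i)))"
    by (simp add: fps_mult_nth sum_distrib_left)
  also have "\<dots> = (\<Sum>i=0..n. (c^i * fps_nth F i) * (c^(n-i) * fps_nth G (n - i)))"
  proof (rule sum.cong)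
    fix i assume "i \<in> {0..n}"
    then have "c^n = c^i * c^(n-i)" by (simp add: power_add[symmetric])
    then show "c^n * (fps_nth F i * fps_nth G (n - i)) = (c^i * fps_nth F i) * (c^(n-i) * fps_nth G (n - i))"
      by (simp add: algebra_simps)
  qed simp
  also have "\<dots> = fps_nth (sc c F * sc c G) n" by (simp add: fps_mult_nth)
  finally show "fps_nth (sc c (F * G)) n = fps_nth (sc c F * sc c G) n" .
qed

lemma sc_add: "sc c (F + G) = sc c F + sc c G"
  by (rule fps_ext) (simp add: algebra_simps)
lemma sc_diff: "sc c (F - G) = sc c F - sc c G"
  by (rule fps_ext) (simp add: algebra_simps)
lemma sc_uminus: "sc c (- F) = - sc c F"
  by (rule fps_ext) (simp add: algebra_simps)
lemma sc_const: "sc c (fps_const k) = fps_const k"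
  by (rule fps_ext) simp
lemma sc_1: "sc c 1 = 1"
  by (rule fps_ext) simp
lemma sc_power: "sc c (F ^ k) = sc c F ^ k"
  by (induction k) (simp_all add: sc_1 sc_mult)
lemma sc_X: "sc c fps_X = fps_const c * fps_X"
  by (rule fps_ext) (simp add: fps_X_def)
lemma sc_deriv: "fps_deriv (sc c F) = fps_const c * sc c (fps_deriv F)"
  by (rule fps_ext) (simp add: algebra_simps)
lemma sc_exp: "sc (c::'a::field_char_0) (fps_exp a) = fps_exp (c * a)"
  by (rule fps_ext) (simp add: power_mult_distrib)
lemma sc_sc: "sc c (sc d F) = sc (c * d) F"
  by (rule fps_ext) (simp add: power_mult_distrib)

definition cf :: "real fps \<Rightarrow> complex fps" where
  "cf F = Abs_fps (\<lambda>n. complex_of_real (fps_nth F n))"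

lemma cf_nth[simp]: "fps_nth (cf F) n = complex_of_real (fps_nth F n)"
  by (simp add: cf_def)
lemma cf_mult: "cf (F * G) = cf F * cf G"
  by (rule fps_ext) (simp add: fps_mult_nth)
lemma cf_add: "cf (F + G) = cf F + cf G"
  by (rule fps_ext) simp
lemma cf_diff: "cf (F - G) = cf F - cf G"
  by (rule fps_ext) simp
lemma cf_const: "cf (fps_const k) = fps_const (of_real k)"
  by (rule fps_ext) simp
lemma cf_1: "cf 1 = 1"
  by (rule fps_ext) simp
lemma cf_X: "cf fps_X = fps_X"
  by (rule fps_ext) (simp add: fps_X_def)
lemma cf_exp: "cf (fps_exp a) = fps_exp (of_real a)"
  by (rule fps_ext) simp
lemma cf_deriv: "cf (fps_deriv F) = fps_deriv (cf F)"
  by (rule fps_ext) simp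
lemma cf_inverse:
  assumes "fps_nth F 0 \<noteq> 0"
  shows "cf (inverse F) = inverse (cf F)"
proof -
  have "F * inverse F = 1" using assms by (simp add: inverse_mult_eq_1')
  then have "cf F * cf (inverse F) = 1"
    by (simp add: cf_mult[symmetric] cf_1)
  moreover have "fps_nth (cf F) 0 \<noteq> 0" using assms by simp
  ultimately show ?thesis
    by (metis fps_inverse_unique mult.commute)
qed

lemma fps_linear_ode_zero:
  fixes D C :: "'a::field_char_0 fps"
  assumes "fps_deriv D = C * D" "fps_nth D 0 = 0"
  shows "D = 0"
proof -
  have "\<forall>m\<le>n. fps_nth D m = 0" for n
  proof (induction n)
    case 0 then show ?case using assms(2) by simp
  next
    case (Suc n)
    have "of_nat (Suc n) * fps_nth D (Suc n) = fps_nth (fps_deriv D) n"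
      by (simp add: algebra_simps)
    also have "\<dots> = (\<Sum>i=0..n. fps_nth C i * fps_nth D (n - i))"
      using assms(1) by (simp add: fps_mult_nth)
    also have "\<dots> = 0" using Suc.IH by (intro sum.neutral) auto
    finally have "fps_nth D (Suc n) = 0"
      by (metis mult_eq_0_iff of_nat_eq_0_iff nat.distinct(1))
    then show ?case using Suc.IH le_Suc_eq by auto
  qed
  then show ?thesis by (intro fps_ext) auto
qed


definition ch :: "complex fps" where
  "ch = fps_const (1/2) * (fps_exp 1 + fps_exp (-1))"
definition sh :: "complex fps" where
  "sh = fps_const (1/2) * (fps_exp 1 - fps_exp (-1))"
definition HH :: "complex fps" where "HH = inverse ch"
definition ZZ :: "complex fps" where "ZZ = sh * HH"

lemma cf_cosh: "cf fps_cosh_real = ch"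
  by (simp add: fps_cosh_real_def ch_def cf_mult cf_add cf_const cf_exp)

lemma EE: "fps_exp (1::complex) * fps_exp (-1) = 1"
  by (simp flip: fps_exp_add_mult)

lemma ch0: "fps_nth ch 0 = 1"
  by (simp add: ch_def)

lemma Hch: "HH * ch = 1"
  unfolding HH_def using ch0 by (simp add: inverse_mult_eq_1)

lemma fps_const_m1: "fps_const (-1::complex) = -1"
  by (rule fps_ext) simp

lemma deriv_ch: "fps_deriv ch = sh"
  by (simp add: ch_def sh_def fps_exp_deriv algebra_simps fps_const_m1)

lemma deriv_sh: "fps_deriv sh = ch"
  by (simp add: ch_def sh_def fps_exp_deriv algebra_simps fps_const_m1)

lemma ch2sh2: "ch^2 - sh^2 = 1"
proof -
  have "ch^2 - sh^2 = fps_exp (1::complex) * fps_exp (-1)"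
    by (simp add: ch_def sh_def power2_eq_square algebra_simps fps_const_mult[symmetric])
  then show ?thesis using EE by simp
qed

lemma deriv_H: "fps_deriv HH = - HH * ZZ"
proof -
  have "fps_deriv HH = - fps_deriv ch * (inverse ch)^2"
    unfolding HH_def using ch0 by (simp add: fps_inverse_deriv)
  then show ?thesis by (simp add: deriv_ch ZZ_def HH_def power2_eq_square algebra_simps)
qed

lemma deriv_Z: "fps_deriv ZZ = 1 - ZZ^2"
proof -
  have "fps_deriv ZZ = ch * HH + sh * (- HH * ZZ)"
    unfolding ZZ_def by (simp add: deriv_sh deriv_H[unfolded ZZ_def] algebra_simps)
  also have "\<dots> = 1 - ZZ^2" using Hch by (simp add: ZZ_def power2_eq_square algebra_simps)
  finally show ?thesis .
qed

lemma H2: "HH^2 = 1 - ZZ^2"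
proof -
  have "HH^2 = HH^2 * (ch^2 - sh^2)" using ch2sh2 by simp
  also have "\<dots> = (HH * ch)^2 - ZZ^2" by (simp add: ZZ_def power2_eq_square algebra_simps)
  finally show ?thesis using Hch by simp
qed

lemma Z0: "fps_nth ZZ 0 = 0"
  by (simp add: ZZ_def sh_def fps_mult_nth)

lemma Zch: "ZZ * ch = sh"
  using Hch by (simp add: ZZ_def algebra_simps)

lemma E2: "fps_exp (2::complex) = fps_exp 1 * fps_exp 1"
  by (simp flip: fps_exp_add_mult)

lemma ZE: "ZZ * (fps_exp 1 * fps_exp 1 + 1) = fps_exp 1 * fps_exp 1 - 1"
proof -
  have a: "fps_exp 1 * fps_exp 1 + 1 = fps_const 2 * fps_exp 1 * ch"
    using EE by (simp add: ch_def algebra_simps fps_const_mult[symmetric] numeral_2_eq_2 fps_const_add[symmetric])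
  have b: "fps_exp 1 * fps_exp 1 - 1 = fps_const 2 * fps_exp 1 * sh"
    using EE by (simp add: sh_def algebra_simps fps_const_mult[symmetric])
  show ?thesis unfolding a b using Zch by (simp add: algebra_simps)
qed

definition bb :: "complex fps" where "bb = cf (fps_X / (fps_exp 1 - 1))"

lemma bb_nth: "fps_nth bb n = complex_of_real (bernoulli_num n / fact n)"
  by (simp add: bb_def bernoulli_num_def)

lemma beta_real: "(fps_X / (fps_exp (1::real) - 1)) * (fps_exp 1 - 1) = fps_X"
proof (rule fps_times_divide_eq)
  have "fps_nth (fps_exp (1::real) - 1) 1 \<noteq> 0" by simp
  then show "fps_exp (1::real) - 1 \<noteq> 0" by auto
  show "subdegree (fps_exp (1::real) - 1) \<le> subdegree (fps_X :: real fps)"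
    by (rule subdegree_leI) simp
qed

lemma bb_eq: "bb * (fps_exp 1 - 1) = fps_X"
proof -
  have "cf ((fps_X / (fps_exp (1::real) - 1)) * (fps_exp 1 - 1)) = cf fps_X"
    using beta_real by simp
  then show ?thesis by (simp add: bb_def cf_mult cf_diff cf_exp cf_1 cf_X)
qed

lemma sc_bb: "sc c bb * (fps_exp c - 1) = fps_const c * fps_X"
proof -
  have "sc c (bb * (fps_exp 1 - 1)) = sc c fps_X" using bb_eq by simp
  then show ?thesis by (simp add: sc_mult sc_diff sc_exp sc_1 sc_X)
qed

lemma Z_bern: "fps_X * ZZ = fps_X - sc 2 bb + sc 4 bb"
proof -
  define Q where "Q = fps_exp (1::complex) * fps_exp 1"
  have Q2: "fps_exp 2 = Q" unfolding Q_def by (simp flip: fps_exp_add_mult)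
  have Q4: "fps_exp 4 = Q * Q" unfolding Q_def by (simp flip: fps_exp_add_mult)
  have s2: "sc 2 bb * (Q - 1) = fps_const 2 * fps_X" using sc_bb[of 2] Q2 by simp
  have s4: "sc 4 bb * (Q * Q - 1) = fps_const 4 * fps_X" using sc_bb[of 4] Q4 by simp
  have nz: "Q * Q - 1 \<noteq> 0"
  proof -
    have "fps_nth (fps_exp (4::complex) - 1) 1 \<noteq> 0" by simp
    then show ?thesis using Q4 by auto
  qed
  have c2: "fps_const (2::complex) = 2" by (simp add: fps_numeral_fps_const)
  have c4: "fps_const (4::complex) = 4" by (simp add: fps_numeral_fps_const)
  have ZE': "ZZ * (Q + 1) = Q - 1" using ZE Q_def by simp
  have "(fps_X * ZZ) * (Q * Q - 1) = fps_X * (ZZ * (Q + 1)) * (Q - 1)"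
    by (simp add: algebra_simps)
  also have "\<dots> = fps_X * (Q - 1) * (Q - 1)" using ZE' by simp
  also have "\<dots> = fps_X * (Q * Q - 1) - (fps_const 2 * fps_X) * (Q + 1) + fps_const 4 * fps_X"
    unfolding c2 c4 by algebra
  also have "\<dots> = fps_X * (Q * Q - 1) - sc 2 bb * (Q - 1) * (Q + 1) + sc 4 bb * (Q * Q - 1)"
    using s2 s4 by simp
  also have "\<dots> = (fps_X - sc 2 bb + sc 4 bb) * (Q * Q - 1)" by (simp add: algebra_simps)
  finally show ?thesis using nz by simp
qed


lemma pascal_conv:
  fixes f g :: "nat \<Rightarrow> 'a::comm_semiring_1"
  shows "(\<Sum>i\<le>n. of_nat (n choose i) * (f (Suc i) * g (n-i) + f i * g (Suc (n-i))))
       = (\<Sum>i\<le>Suc n. of_nat (Suc n choose i) * (f i * g (Suc n - i)))"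
proof -
  have R: "(\<Sum>i\<le>Suc n. of_nat (Suc n choose i) * (f i * g (Suc n - i)))
      = f 0 * g (Suc n) + (\<Sum>i\<le>n. of_nat (n choose i) * (f (Suc i) * g (n - i)))
        + (\<Sum>i\<le>n. of_nat (n choose Suc i) * (f (Suc i) * g (n - i)))"
    unfolding sum.atMost_Suc_shift by (simp add: binomial_Suc_Suc algebra_simps sum.distrib)
  have L2: "(\<Sum>i\<le>n. of_nat (n choose i) * (f i * g (Suc (n-i))))
      = f 0 * g (Suc n) + (\<Sum>i<n. of_nat (n choose Suc i) * (f (Suc i) * g (Suc (n - Suc i))))"
    by (simp add: sum.atMost_shift)
  have L3: "(\<Sum>i<n. of_nat (n choose Suc i) * (f (Suc i) * g (Suc (n - Suc i))))
      = (\<Sum>i\<le>n. of_nat (n choose Suc i) * (f (Suc i) * g (n - i)))"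
  proof -
    have "(\<Sum>i<n. of_nat (n choose Suc i) * (f (Suc i) * g (Suc (n - Suc i))))
        = (\<Sum>i<n. of_nat (n choose Suc i) * (f (Suc i) * g (n - i)))"
      by (intro sum.cong refl) (simp add: Suc_diff_Suc)
    also have "\<dots> = (\<Sum>i\<le>n. of_nat (n choose Suc i) * (f (Suc i) * g (n - i)))"
      by (simp add: lessThan_Suc_atMost[symmetric] binomial_eq_0)
    finally show ?thesis .
  qed
  show ?thesis unfolding R using L2 L3
    by (simp add: sum.distrib algebra_simps)
qed

fun P :: "nat \<Rightarrow> real poly" where
  "P 0 = [:0, 1:]"
| "P (Suc n) = pderiv (P n) * [:1, 0, 1:]"

lemma pderiv_sum': "pderiv (sum f A) = (\<Sum>x\<in>A. pderiv (f x))"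
  using higher_pderiv_sum[of 1 f A] by simp

lemma P_conv: "P (Suc n) = (if n = 0 then 1 else 0) + (\<Sum>i\<le>n. of_nat (n choose i) * (P i * P (n-i)))"
proof (induction n)
  case 0
  have "[:1, 0, 1:] = 1 + [:0, 0, 1::real:]" by (simp add: one_pCons)
  then show ?case by (simp add: pderiv_pCons)
next
  case (Suc n)
  have "P (Suc (Suc n)) = pderiv (P (Suc n)) * [:1, 0, 1:]" by simp
  also have "\<dots> = (\<Sum>i\<le>n. of_nat (n choose i) * ((pderiv (P i) * [:1, 0, 1:]) * P (n-i) + P i * (pderiv (P (n-i)) * [:1, 0, 1:])))"
  proof -
    have z: "pderiv (if n = 0 then 1 else (0::real poly)) = 0" by simp
    show ?thesis
      apply (subst Suc)
      unfolding pderiv_add z pderiv_sum' add_0 sum_distrib_right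
      apply (intro sum.cong refl)
      apply (simp add: pderiv_mult algebra_simps)
      done
  qed
  also have "\<dots> = (\<Sum>i\<le>n. of_nat (n choose i) * (P (Suc i) * P (n-i) + P i * P (Suc (n-i))))"
    by simp
  also have "\<dots> = (\<Sum>i\<le>Suc n. of_nat (Suc n choose i) * (P i * P (Suc n - i)))"
    by (rule pascal_conv)
  finally show ?case by simp
qed

lemma P_conv_val: "poly (P (Suc n)) c = (if n = 0 then 1 else 0) + (\<Sum>i\<le>n. real (n choose i) * (poly (P i) c * poly (P (n-i)) c))"
  by (subst P_conv) (simp add: poly_sum)

lemma P_nonneg: "c \<ge> 0 \<Longrightarrow> poly (P n) c \<ge> 0"
proof (induction n rule: less_induct)
  case (less n)
  show ?case
  proof (cases n)
    case 0 then show ?thesis using less.prems by simp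
  next
    case (Suc m)
    have "0 \<le> (\<Sum>i\<le>m. real (m choose i) * (poly (P i) c * poly (P (m-i)) c))"
      using less Suc by (intro sum_nonneg mult_nonneg_nonneg) auto
    then show ?thesis unfolding Suc P_conv_val by simp
  qed
qed

lemma P_pos: "c > 0 \<Longrightarrow> poly (P n) c > 0"
proof (induction n)
  case 0 then show ?case by simp
next
  case (Suc n)
  have "0 < real (n choose 0) * (poly (P 0) c * poly (P (n-0)) c)"
    using Suc by simp
  also have "\<dots> \<le> (\<Sum>i\<le>n. real (n choose i) * (poly (P i) c * poly (P (n-i)) c))"
    using Suc.prems P_nonneg
    by (intro member_le_sum mult_nonneg_nonneg) auto
  finally have "0 < (\<Sum>i\<le>n. real (n choose i) * (poly (P i) c * poly (P (n-i)) c))" .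
  moreover have "0 \<le> (if n = 0 then 1 else 0::real)" by simp
  ultimately show ?case unfolding P_conv_val by linarith
qed


definition egf :: "real \<Rightarrow> complex fps" where
  "egf c = Abs_fps (\<lambda>n. complex_of_real (poly (P n) c / fact n))"

lemma egf0: "fps_nth (egf c) 0 = complex_of_real c"
  by (simp add: egf_def)

lemma egf_ode: "fps_deriv (egf c) = 1 + (egf c)^2"
proof (rule fps_ext)
  fix n
  have r: "real (Suc n) * (poly (P (Suc n)) c / fact (Suc n)) = poly (P (Suc n)) c / fact n"
    by (simp add: fact_Suc del: P.simps of_nat_Suc)
  have "fps_nth (fps_deriv (egf c)) n = of_nat (Suc n) * complex_of_real (poly (P (Suc n)) c / fact (Suc n))"
    by (simp add: egf_def del: P.simps of_nat_Suc)
  also have "\<dots> = complex_of_real (poly (P (Suc n)) c / fact n)"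
    by (subst r[symmetric]) (simp del: P.simps of_nat_Suc)
  also have "\<dots> = complex_of_real ((if n = 0 then 1 else 0) +
      (\<Sum>i\<le>n. (poly (P i) c / fact i) * (poly (P (n-i)) c / fact (n - i))))"
  proof -
    have "poly (P (Suc n)) c / fact n = (if n = 0 then 1 else 0) / fact n +
      (\<Sum>i\<le>n. real (n choose i) * (poly (P i) c * poly (P (n-i)) c)) / fact n"
      by (subst P_conv_val) (simp add: add_divide_distrib)
    also have "\<dots> = (if n = 0 then 1 else 0) +
      (\<Sum>i\<le>n. (poly (P i) c / fact i) * (poly (P (n-i)) c / fact (n - i)))"
      unfolding sum_divide_distrib
      by (intro arg_cong2[where f="(+)"] sum.cong refl)
         (auto simp: binomial_fact field_simps)
    finally show ?thesis by simp
  qed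
  also have "\<dots> = fps_nth (1 + (egf c)^2) n"
    by (simp add: power2_eq_square fps_mult_nth egf_def atLeast0AtMost)
  finally show "fps_nth (fps_deriv (egf c)) n = fps_nth (1 + (egf c)^2) n" .
qed

definition WW :: "complex fps" where "WW = fps_const (- \<i>) * sc \<i> ZZ"

lemma const_i_sq: "fps_const (- \<i>) * fps_const (- \<i>) = -1"
  by (simp add: fps_const_mult fps_const_m1)

lemma sq_mi: "(fps_const (- \<i>) * X)^2 = - (X^2)"
proof -
  have "(fps_const (- \<i>) * X)^2 = (fps_const (- \<i>) * fps_const (- \<i>)) * X^2"
    by (simp only: power2_eq_square ac_simps)
  also have "\<dots> = - (X^2)" by (simp only: const_i_sq) simp
  finally show ?thesis .
qed

lemma WW_ode: "fps_deriv WW = 1 + WW^2"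
proof -
  have "fps_deriv WW = fps_const (- \<i>) * (fps_const \<i> * sc \<i> (1 - ZZ^2))"
    by (simp add: WW_def sc_deriv deriv_Z)
  also have "\<dots> = 1 - (sc \<i> ZZ)^2"
    by (simp add: sc_diff sc_1 sc_power mult.assoc[symmetric] fps_const_mult)
  also have "\<dots> = 1 + WW^2"
    by (simp only: WW_def sq_mi) simp
  finally show ?thesis .
qed

lemma AA_eq: "egf 0 = WW"
proof -
  define D where "D = egf 0 - WW"
  have "fps_deriv D = (egf 0 + WW) * D"
    unfolding D_def by (simp add: egf_ode WW_ode power2_eq_square algebra_simps)
  moreover have "fps_nth D 0 = 0"
    by (simp add: D_def egf0 WW_def Z0)
  ultimately have "D = 0" by (rule fps_linear_ode_zero)
  then show ?thesis by (simp add: D_def)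
qed

lemma Z_nth: "n \<ge> 1 \<Longrightarrow> fps_nth ZZ n = (4^(Suc n) - 2^(Suc n)) * complex_of_real (bernoulli_num (Suc n) / fact (Suc n))"
proof -
  assume n: "n \<ge> 1"
  have "fps_nth ZZ n = fps_nth (fps_X * ZZ) (Suc n)" by simp
  also have "\<dots> = fps_nth (fps_X - sc 2 bb + sc 4 bb) (Suc n)" by (simp only: Z_bern)
  also have "\<dots> = (4^(Suc n) - 2^(Suc n)) * fps_nth bb (Suc n)"
    using n by (simp add: algebra_simps)
  finally show ?thesis by (simp add: bb_nth)
qed

lemma a_complex: "n \<ge> 1 \<Longrightarrow> complex_of_real (poly (P n) 0) =
   - (\<i>^(Suc n)) * complex_of_real ((4^(Suc n) - 2^(Suc n)) * bernoulli_num (Suc n) / real (Suc n))"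
proof -
  assume n: "n \<ge> 1"
  have "complex_of_real (poly (P n) 0 / fact n) = fps_nth (egf 0) n" by (simp add: egf_def)
  also have "\<dots> = - \<i> * \<i>^n * fps_nth ZZ n" by (simp add: AA_eq WW_def)
  also have "\<dots> = - (\<i>^(Suc n)) * complex_of_real ((4^(Suc n) - 2^(Suc n)) * bernoulli_num (Suc n) / fact (Suc n))"
    using n by (simp add: Z_nth)
  finally have e: "complex_of_real (poly (P n) 0 / fact n) = - (\<i>^(Suc n)) * complex_of_real ((4^(Suc n) - 2^(Suc n)) * bernoulli_num (Suc n) / fact (Suc n))" .
  have "complex_of_real (poly (P n) 0) = complex_of_real (fact n) * complex_of_real (poly (P n) 0 / fact n)"
    by (simp flip: of_real_mult)
  also have "\<dots> = - (\<i>^(Suc n)) * complex_of_real (fact n * ((4^(Suc n) - 2^(Suc n)) * bernoulli_num (Suc n) / fact (Suc n)))"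
    unfolding e by (simp add: of_real_mult)
  also have "fact n * ((4^(Suc n) - 2^(Suc n)) * bernoulli_num (Suc n) / fact (Suc n)) = (4^(Suc n) - 2^(Suc n)) * bernoulli_num (Suc n) / real (Suc n)"
    by (simp add: fact_Suc field_simps del: of_nat_Suc)
  finally show ?thesis .
qed

lemma a_abs: "n \<ge> 1 \<Longrightarrow> poly (P n) 0 = (4^(Suc n) - 2^(Suc n)) * \<bar>bernoulli_num (Suc n)\<bar> / real (Suc n)"
proof -
  assume n: "n \<ge> 1"
  have "norm (complex_of_real (poly (P n) 0)) = norm (complex_of_real ((4^(Suc n) - 2^(Suc n)) * bernoulli_num (Suc n) / real (Suc n)))"
  proof -
    have nn: "norm (- (\<i>^(Suc n)) * complex_of_real r) = norm (complex_of_real r)" for r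
      by (simp only: norm_mult norm_minus_cancel norm_power) simp
    show ?thesis by (subst a_complex[OF n]) (rule nn)
  qed
  then have "\<bar>poly (P n) 0\<bar> = \<bar>(4^(Suc n) - 2^(Suc n)) * bernoulli_num (Suc n) / real (Suc n)\<bar>"
    by (simp only: norm_of_real)
  moreover have "(2::real)^(Suc n) \<le> 4^(Suc n)" by (intro power_mono) auto
  ultimately show ?thesis using P_nonneg[of 0 n] by (simp add: abs_mult)
qed

lemma a_even: "even n \<Longrightarrow> poly (P n) 0 = 0"
proof (cases "n = 0")
  case True then show ?thesis by simp
next
  case False
  assume ev: "even n"
  then obtain k where k: "n = 2 * k" by auto
  have ip: "\<i>^(Suc n) = \<i> * (-1)^k" unfolding k by (simp add: power_mult)
  have "complex_of_real (poly (P n) 0) = \<i> * complex_of_real (- ((-1)^k * ((4^(Suc n) - 2^(Suc n)) * bernoulli_num (Suc n) / real (Suc n))))"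
    using a_complex[of n] False unfolding ip by simp
  then have "Re (complex_of_real (poly (P n) 0)) = 0" by (simp only: Re_i_times) simp
  then show ?thesis by simp
qed


lemma cosh0: "fps_nth fps_cosh_real 0 \<noteq> 0"
  by (simp add: fps_cosh_real_def)

lemma HH_cf: "HH = cf (inverse fps_cosh_real)"
  by (simp add: cf_inverse[OF cosh0] cf_cosh HH_def)

lemma HH_nth: "fps_nth HH n = complex_of_real (euler_num n / fact n)"
  by (simp add: HH_cf euler_num_def)

definition UU :: "complex fps" where "UU = sc (1/2) (egf 1)"
definition SS :: "complex fps" where "SS = sc \<i> HH"

lemma UU_ode: "fps_deriv UU = fps_const (1/2) * (1 + UU^2)"
  by (simp add: UU_def sc_deriv egf_ode sc_add sc_1 sc_power)

lemma SS_deriv: "fps_deriv SS = SS * egf 0"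
proof -
  have "fps_deriv SS = fps_const \<i> * sc \<i> (- HH * ZZ)"
    by (simp add: SS_def sc_deriv deriv_H)
  also have "\<dots> = SS * (fps_const (- \<i>) * sc \<i> ZZ)"
    by (simp add: SS_def sc_mult sc_uminus) (simp add: fps_const_neg[symmetric] algebra_simps del: fps_const_neg)
  finally show ?thesis by (simp add: AA_eq WW_def)
qed

lemma SS_sq: "SS^2 = 1 + (egf 0)^2"
proof -
  have "SS^2 = sc \<i> (1 - ZZ^2)" by (simp only: SS_def sc_power[symmetric] H2)
  also have "\<dots> = 1 + (fps_const (- \<i>) * sc \<i> ZZ)^2"
    by (simp only: sq_mi sc_diff sc_1 sc_power) simp
  finally show ?thesis by (simp add: AA_eq WW_def)
qed

lemma UU_eq: "UU = SS + egf 0"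
proof -
  define V where "V = SS + egf 0"
  have dV: "fps_deriv V = fps_const (1/2) * (1 + V^2)"
  proof -
    have "fps_deriv V = SS * egf 0 + (1 + (egf 0)^2)"
      by (simp add: V_def SS_deriv egf_ode)
    also have "\<dots> = fps_const (1/2) * (fps_const 2 * (1 + (egf 0)^2 + SS * egf 0))"
    proof -
      have h: "fps_const (1/2) * (fps_const 2 * Y) = Y" for Y :: "complex fps"
        by (simp add: mult.assoc[symmetric] fps_const_mult)
      show ?thesis by (simp only: h) (simp add: algebra_simps)
    qed
    also have "\<dots> = fps_const (1/2) * (1 + V^2)"
    proof -
      have c2: "fps_const (2::complex) = 2" by (simp add: fps_numeral_fps_const)
      have "1 + V^2 = 1 + SS^2 + 2 * SS * egf 0 + (egf 0)^2"
        unfolding V_def by (simp add: power2_eq_square algebra_simps)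
      also have "\<dots> = 2 * (1 + (egf 0)^2 + SS * egf 0)"
        unfolding SS_sq by (simp add: algebra_simps)
      finally show ?thesis unfolding c2 by simp
    qed
    finally show ?thesis .
  qed
  define D where "D = UU - V"
  have "fps_deriv D = (fps_const (1/2) * (UU + V)) * D"
    unfolding D_def by (simp add: UU_ode dV power2_eq_square algebra_simps)
  moreover have "fps_nth D 0 = 0"
    by (simp add: D_def V_def UU_def SS_def egf0 HH_def ch0)
  ultimately have "D = 0" by (rule fps_linear_ode_zero)
  then show ?thesis by (simp add: D_def V_def)
qed

lemma b_rel: "complex_of_real ((1/2)^n * poly (P n) 1) = \<i>^n * complex_of_real (euler_num n) + complex_of_real (poly (P n) 0)"
proof -
  have "complex_of_real ((1/2)^n * poly (P n) 1 / fact n) = fps_nth UU n"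
    by (simp add: UU_def egf_def)
  also have "\<dots> = \<i>^n * complex_of_real (euler_num n / fact n) + complex_of_real (poly (P n) 0 / fact n)"
    by (simp add: UU_eq SS_def HH_nth egf_def)
  finally have e: "complex_of_real ((1/2)^n * poly (P n) 1 / fact n) = \<i>^n * complex_of_real (euler_num n / fact n) + complex_of_real (poly (P n) 0 / fact n)" .
  have "complex_of_real ((1/2)^n * poly (P n) 1) = complex_of_real (fact n) * complex_of_real ((1/2)^n * poly (P n) 1 / fact n)"
    by (simp flip: of_real_mult)
  also have "\<dots> = \<i>^n * complex_of_real (euler_num n) + complex_of_real (poly (P n) 0)"
    unfolding e by (simp add: algebra_simps flip: of_real_mult)
  finally show ?thesis .
qed

lemma b_even: "even n \<Longrightarrow> poly (P n) 1 = 2^n * \<bar>euler_num n\<bar>"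
proof -
  assume ev: "even n"
  then obtain k where k: "n = 2 * k" by auto
  have "complex_of_real ((1/2)^n * poly (P n) 1) = complex_of_real ((-1)^k * euler_num n)"
    using b_rel[of n] a_even[OF ev] unfolding k by (simp add: power_mult)
  then have "(1/2)^n * poly (P n) 1 = (-1)^k * euler_num n" by (simp only: of_real_eq_iff)
  then have "\<bar>(1/2)^n * poly (P n) 1\<bar> = \<bar>euler_num n\<bar>" by (simp add: abs_mult)
  then have "(1/2)^n * poly (P n) 1 = \<bar>euler_num n\<bar>" using P_nonneg[of 1 n] by (simp add: abs_mult)
  then show ?thesis by (simp add: field_simps)
qed

lemma b_odd: "odd n \<Longrightarrow> poly (P n) 1 = 2^n * poly (P n) 0"
proof -
  assume od: "odd n"
  then obtain k where k: "n = 2 * k + 1" using oddE by blast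
  have "complex_of_real ((1/2)^n * poly (P n) 1 - poly (P n) 0) = \<i> * complex_of_real ((-1)^k * euler_num n)"
    using b_rel[of n] unfolding k by (simp add: power_mult)
  then have "Re (complex_of_real ((1/2)^n * poly (P n) 1 - poly (P n) 0)) = 0"
    by (simp only: Re_i_times) simp
  then have "(1/2)^n * poly (P n) 1 = poly (P n) 0" by simp
  then show ?thesis by (simp add: field_simps)
qed


lemma convex_bound:
  fixes f f1 f2 :: "real \<Rightarrow> real"
  assumes d1: "\<And>x. 0 < x \<Longrightarrow> x < 2*pi \<Longrightarrow> (f has_real_derivative f1 x) (at x)"
    and d2: "\<And>x. 0 < x \<Longrightarrow> x < 2*pi \<Longrightarrow> (f1 has_real_derivative f2 x) (at x)"
    and pos: "\<And>x. 0 < x \<Longrightarrow> x < pi \<Longrightarrow> f2 x > 0"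
    and x: "0 < x" and y: "0 < y" and xy: "x + y \<le> pi"
  shows "2 * f (pi/2) - f pi \<le> f x + f y - f (x + y)"
proof -
  have mono1: "f1 a \<le> f1 b" if "0 < a" "a \<le> b" "b \<le> pi" for a b
  proof (cases "a = b")
    case True then show ?thesis by simp
  next
    case False
    then have ab: "a < b" using that by simp
    have "\<exists>z>a. z < b \<and> f1 b - f1 a = (b - a) * f2 z"
      by (rule MVT2[OF ab]) (use that pi_gt_zero in \<open>intro d2; linarith\<close>)
    then obtain z where z: "a < z" "z < b" "f1 b - f1 a = (b - a) * f2 z" by blast
    have "f2 z > 0" using z that by (intro pos) auto
    then have "(b - a) * f2 z \<ge> 0" using ab by simp
    then show ?thesis using z by simp
  qed
  have half: "2 * f (s/2) \<le> f t + f (s - t)" if s: "0 < s" "s \<le> pi" and t: "0 < t" "t \<le> s/2" for s t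
  proof (cases "t = s/2")
    case True
    then have "s - t = s/2" by simp
    then have "f (s - t) = f (s/2)" by (rule arg_cong)
    moreover have "f t = f (s/2)" using True by (rule arg_cong)
    ultimately have "f t + f (s - t) = 2 * f (s/2)" by simp
    then show ?thesis by simp
  next
    case False
    then have ts: "t < s/2" using t by simp
    define \<phi> where "\<phi> u = f u + f (s - u)" for u
    have dphi: "(\<phi> has_real_derivative (f1 u - f1 (s - u))) (at u)" if "t \<le> u" "u \<le> s/2" for u
    proof -
      have u: "0 < u" "u < 2*pi" "0 < s - u" "s - u < 2*pi" using that s t pi_gt_zero by linarith+
      have "((\<lambda>u. f (s - u)) has_real_derivative f1 (s - u) * (-1)) (at u)"
        by (rule DERIV_chain2[where g="\<lambda>u. s - u", OF d1[OF u(3,4)]]) (auto intro!: derivative_eq_intros)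
      then show ?thesis unfolding \<phi>_def using d1[OF u(1,2)]
        by (auto intro!: derivative_eq_intros)
    qed
    obtain z where z: "t < z" "z < s/2" "\<phi> (s/2) - \<phi> t = (s/2 - t) * (f1 z - f1 (s - z))"
      using MVT2[OF ts dphi] by blast
    have "f1 z \<le> f1 (s - z)" using z s t by (intro mono1) auto
    then have "(s/2 - t) * (f1 z - f1 (s - z)) \<le> 0" using ts
      by (intro mult_nonneg_nonpos) auto
    then have "\<phi> (s/2) \<le> \<phi> t" using z by simp
    then show ?thesis by (simp add: \<phi>_def)
  qed
  have half2: "2 * f (s/2) \<le> f t + f (s - t)" if s: "0 < s" "s \<le> pi" and t: "0 < t" "t < s" for s t
  proof (cases "t \<le> s/2")
    case True then show ?thesis using half s t by auto
  next
    case False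
    then have "2 * f (s/2) \<le> f (s - t) + f (s - (s - t))" using s t by (intro half) auto
    then show ?thesis by simp
  qed
  have Gmono: "2 * f (pi/2) - f pi \<le> 2 * f (s/2) - f s" if s: "0 < s" "s \<le> pi" for s
  proof (cases "s = pi")
    case True then show ?thesis by simp
  next
    case False
    then have sp: "s < pi" using s by simp
    define G where "G u = 2 * f (u/2) - f u" for u
    have dG: "(G has_real_derivative (f1 (u/2) - f1 u)) (at u)" if "s \<le> u" "u \<le> pi" for u
    proof -
      have u: "0 < u" "u < 2*pi" "0 < u/2" "u/2 < 2*pi" using that s pi_gt_zero by linarith+
      have "((\<lambda>u. f (u/2)) has_real_derivative f1 (u/2) * (1/2)) (at u)"
        by (rule DERIV_chain2[where g="\<lambda>u. u/2", OF d1[OF u(3,4)]]) (auto intro!: derivative_eq_intros)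
      then show ?thesis unfolding G_def using d1[OF u(1,2)]
        by (auto intro!: derivative_eq_intros)
    qed
    obtain z where z: "s < z" "z < pi" "G pi - G s = (pi - s) * (f1 (z/2) - f1 z)"
      using MVT2[OF sp dG] by blast
    have "f1 (z/2) \<le> f1 z" using z s by (intro mono1) auto
    then have "(pi - s) * (f1 (z/2) - f1 z) \<le> 0" using sp
      by (intro mult_nonneg_nonpos) auto
    then show ?thesis using z by (simp add: G_def)
  qed
  have "2 * f ((x+y)/2) \<le> f x + f ((x + y) - x)" using x y xy by (intro half2) auto
  moreover have "2 * f (pi/2) - f pi \<le> 2 * f ((x+y)/2) - f (x+y)" using x y xy by (intro Gmono) auto
  ultimately show ?thesis by simp
qed


definition Fn :: "nat \<Rightarrow> real \<Rightarrow> real" where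
  "Fn n x = (-1)^n / 2^(Suc n) * poly (P (Suc n)) (cot (x/2))"

lemma sin_half_pos: "0 < x \<Longrightarrow> x < 2*pi \<Longrightarrow> sin (x/2) > 0"
  by (intro sin_gt_zero) auto

lemma one_plus_cot_sq: "sin z \<noteq> 0 \<Longrightarrow> 1 + (cot z)^2 = inverse ((sin z)^2)"
  by (simp add: cot_def field_simps power2_eq_square sin_squared_eq)

lemma Fn_deriv:
  assumes "0 < x" "x < 2*pi"
  shows "(Fn n has_real_derivative Fn (Suc n) x) (at x)"
proof -
  have s: "sin (x/2) \<noteq> 0" using sin_half_pos[OF assms] by simp
  have dc: "((\<lambda>x. cot (x/2)) has_real_derivative (- inverse ((sin (x/2))^2)) * (1/2)) (at x)"
    by (rule DERIV_chain2[where g="\<lambda>x. x/2", OF DERIV_cot[OF s]]) (auto intro!: derivative_eq_intros)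
  have dp: "((\<lambda>x. poly (P (Suc n)) (cot (x/2))) has_real_derivative
      poly (pderiv (P (Suc n))) (cot (x/2)) * ((- inverse ((sin (x/2))^2)) * (1/2))) (at x)"
    by (rule DERIV_chain2[where g="\<lambda>x. cot (x/2)", OF poly_DERIV dc])
  have "(Fn n has_real_derivative (-1)^n / 2^(Suc n) *
      (poly (pderiv (P (Suc n))) (cot (x/2)) * ((- inverse ((sin (x/2))^2)) * (1/2)))) (at x)"
    unfolding Fn_def[abs_def] by (rule DERIV_cmult[OF dp])
  moreover have "(-1)^n / 2^(Suc n) *
      (poly (pderiv (P (Suc n))) (cot (x/2)) * ((- inverse ((sin (x/2))^2)) * (1/2))) = Fn (Suc n) x"
  proof -
    define c where "c = cot (x/2)"
    define q where "q = poly (pderiv (P (Suc n))) c"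
    have pp: "poly (P (Suc (Suc n))) c = q * (1 + c^2)"
      unfolding q_def by (simp only: P.simps(2) poly_mult) (simp add: power2_eq_square)
    show ?thesis
      unfolding Fn_def one_plus_cot_sq[OF s, symmetric] c_def[symmetric] q_def[symmetric] pp
      by (simp add: field_simps)
  qed
  ultimately show ?thesis by simp
qed

lemma g_Fn0:
  assumes "0 < x" "x < 2*pi"
  shows "g_fun x = Fn 0 x"
proof -
  have s: "sin (x/2) \<noteq> 0" using sin_half_pos[OF assms] by simp
  have c: "cos x = 1 - 2 * (sin (x/2))^2"
    using cos_double_sin[of "x/2"] by simp
  have "Fn 0 x = (1 + (cot (x/2))^2) / 2"
    by (simp add: Fn_def pderiv_pCons power2_eq_square algebra_simps)
  also have "\<dots> = 1 / (1 - cos x)"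
    unfolding one_plus_cot_sq[OF s] c using s by (simp add: field_simps)
  finally show ?thesis by (simp add: g_fun_def)
qed

lemma deriv_iter:
  "0 < x \<Longrightarrow> x < 2*pi \<Longrightarrow> (deriv ^^ n) g_fun x = Fn n x"
proof (induction n arbitrary: x)
  case 0 then show ?case by (simp add: g_Fn0)
next
  case (Suc n)
  have "((deriv ^^ n) g_fun has_real_derivative Fn (Suc n) x) (at x)"
  proof (rule has_field_derivative_transform_within_open[OF Fn_deriv[OF Suc.prems]])
    show "open {0<..<2*pi}" by simp
    show "x \<in> {0<..<2*pi}" using Suc.prems by simp
    show "\<And>y. y \<in> {0<..<2*pi} \<Longrightarrow> Fn n y = (deriv ^^ n) g_fun y"
      using Suc.IH by simp
  qed
  then show ?case by (simp add: DERIV_imp_deriv)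
qed


lemma cot_half_pos: "0 < x \<Longrightarrow> x < pi \<Longrightarrow> cot (x/2) > 0"
proof -
  assume x: "0 < x" "x < pi"
  have "sin (x/2) > 0" using x by (intro sin_gt_zero) auto
  moreover have "cos (x/2) > 0" using x by (intro cos_gt_zero_pi) auto
  ultimately show ?thesis by (simp add: cot_def)
qed

lemma key:
  assumes "0 < x" "0 < y" "x + y \<le> pi"
  shows "(-1)^n * (2 * Fn n (pi/2) - Fn n pi) \<le> (-1)^n * (Fn n x + Fn n y - Fn n (x+y))"
proof -
  have "2 * ((-1)^n * Fn n (pi/2)) - (-1)^n * Fn n pi
      \<le> (-1)^n * Fn n x + (-1)^n * Fn n y - (-1)^n * Fn n (x+y)"
  proof (rule convex_bound[of "\<lambda>x. (-1)^n * Fn n x" "\<lambda>x. (-1)^n * Fn (Suc n) x" "\<lambda>x. (-1)^n * Fn (Suc (Suc n)) x"])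
    show "((\<lambda>x. (-1)^n * Fn n x) has_real_derivative (-1)^n * Fn (Suc n) x) (at x)"
      if "0 < x" "x < 2*pi" for x
      using Fn_deriv[OF that] by (rule DERIV_cmult)
    show "((\<lambda>x. (-1)^n * Fn (Suc n) x) has_real_derivative (-1)^n * Fn (Suc (Suc n)) x) (at x)"
      if "0 < x" "x < 2*pi" for x
      using Fn_deriv[OF that] by (rule DERIV_cmult)
    show "(-1)^n * Fn (Suc (Suc n)) x > 0" if "0 < x" "x < pi" for x
    proof -
      have "poly (P (Suc (Suc (Suc n)))) (cot (x/2)) > 0"
        using cot_half_pos[OF that] by (rule P_pos)
      then show ?thesis by (simp add: Fn_def del: P.simps)
    qed
  qed (use assms in auto)
  then show ?thesis by (simp add: algebra_simps)
qed

lemma cot_pi4: "cot (pi/4) = 1"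
  by (simp add: cot_def sin_45 cos_45)

lemma Fn_pi2: "Fn n (pi/2) = (-1)^n / 2^(Suc n) * poly (P (Suc n)) 1"
proof -
  have "pi / 2 / 2 = pi / 4" by simp
  then show ?thesis by (simp add: Fn_def cot_pi4 del: P.simps)
qed

lemma Fn_pi: "Fn n pi = (-1)^n / 2^(Suc n) * poly (P (Suc n)) 0"
  by (simp add: Fn_def cot_def del: P.simps)

lemma val_even:
  assumes "even n"
  shows "2 * Fn n (pi/2) - Fn n pi = 2 / real (n + 2) * (2 ^ (n + 2) - 1)\<^sup>2 * \<bar>bernoulli_num (n + 2)\<bar>"
proof -
  have o: "odd (Suc n)" using assms by simp
  define a where "a = poly (P (Suc n)) 0"
  define t :: real where "t = 2^(Suc n)"
  have b: "poly (P (Suc n)) 1 = t * a" unfolding a_def t_def by (rule b_odd[OF o])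
  have a: "a = (4 * t * t - 2 * t) * \<bar>bernoulli_num (n + 2)\<bar> / real (n + 2)"
  proof -
    have p4: "(4::real)^k = 2^k * 2^k" for k by (induction k) auto
    have "a = (4^(Suc (Suc n)) - 2^(Suc (Suc n))) * \<bar>bernoulli_num (Suc (Suc n))\<bar> / real (Suc (Suc n))"
      unfolding a_def by (rule a_abs) simp
    also have "(4::real)^(Suc (Suc n)) = 4 * t * t" unfolding p4 t_def by simp
    also have "(2::real)^(Suc (Suc n)) = 2 * t" unfolding t_def by simp
    finally show ?thesis by (simp add: numeral_2_eq_2)
  qed
  have e: "(-1::real)^n = 1" using assms by simp
  have "2 * Fn n (pi/2) - Fn n pi = (2 * t * a - a) / t"
    unfolding Fn_pi2 Fn_pi e b a_def[symmetric] t_def[symmetric] by (simp add: field_simps t_def)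
  also have "\<dots> = 2 / real (n + 2) * (2 * t - 1)\<^sup>2 * \<bar>bernoulli_num (n + 2)\<bar>"
  proof -
    have tp: "t > 0" by (simp add: t_def)
    have np: "real (n + 2) > 0" by simp
    show ?thesis unfolding a using tp np
      by (simp add: divide_simps power2_eq_square) (simp add: algebra_simps)
  qed
  also have "2 * t = 2 ^ (n + 2)" by (simp add: t_def)
  finally show ?thesis .
qed

lemma val_odd:
  assumes "odd n"
  shows "- (2 * Fn n (pi/2) - Fn n pi) = 2 * \<bar>euler_num (n + 1)\<bar>"
proof -
  have ev: "even (Suc n)" using assms by simp
  have e: "(-1::real)^n = -1" using assms by simp
  show ?thesis
    unfolding Fn_pi2 Fn_pi e b_even[OF ev] a_even[OF ev] by simp
qed

theorem theorem2:
  fixes n :: nat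
  shows "(even n \<longrightarrow>
      (let lam = 2 / real (n + 2) * (2 ^ (n + 2) - 1)\<^sup>2 * \<bar>bernoulli_num (n + 2)\<bar> in
        (\<forall>x y. 0 < x \<and> 0 < y \<and> x + y \<le> pi \<longrightarrow>
            lam \<le> (deriv ^^ n) g_fun x + (deriv ^^ n) g_fun y - (deriv ^^ n) g_fun (x + y)) \<and>
        (\<forall>c. (\<forall>x y. 0 < x \<and> 0 < y \<and> x + y \<le> pi \<longrightarrow>
            c \<le> (deriv ^^ n) g_fun x + (deriv ^^ n) g_fun y - (deriv ^^ n) g_fun (x + y))
          \<longrightarrow> c \<le> lam)))
    \<and> (odd n \<longrightarrow>
      (let mu = 2 * \<bar>euler_num (n + 1)\<bar> in
        (\<forall>x y. 0 < x \<and> 0 < y \<and> x + y \<le> pi \<longrightarrow>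
            mu \<le> (deriv ^^ n) g_fun (x + y) - (deriv ^^ n) g_fun x - (deriv ^^ n) g_fun y) \<and>
        (\<forall>c. (\<forall>x y. 0 < x \<and> 0 < y \<and> x + y \<le> pi \<longrightarrow>
            c \<le> (deriv ^^ n) g_fun (x + y) - (deriv ^^ n) g_fun x - (deriv ^^ n) g_fun y)
          \<longrightarrow> c \<le> mu)))"
proof -
  have D: "(deriv ^^ n) g_fun x = Fn n x" if "0 < x" "x \<le> pi" for x
    using that pi_gt_zero by (intro deriv_iter) auto
  have pi2: "(deriv ^^ n) g_fun (pi/2) = Fn n (pi/2)" by (rule D) auto
  have pi1: "(deriv ^^ n) g_fun pi = Fn n pi" by (rule D) auto
  have ppi: "pi/2 + pi/2 = pi" by simp
  show ?thesis
  proof (intro conjI impI)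
    assume ev: "even n"
    have e: "(-1::real)^n = 1" using ev by simp
    show "let lam = 2 / real (n + 2) * (2 ^ (n + 2) - 1)\<^sup>2 * \<bar>bernoulli_num (n + 2)\<bar> in
        (\<forall>x y. 0 < x \<and> 0 < y \<and> x + y \<le> pi \<longrightarrow>
            lam \<le> (deriv ^^ n) g_fun x + (deriv ^^ n) g_fun y - (deriv ^^ n) g_fun (x + y)) \<and>
        (\<forall>c. (\<forall>x y. 0 < x \<and> 0 < y \<and> x + y \<le> pi \<longrightarrow>
            c \<le> (deriv ^^ n) g_fun x + (deriv ^^ n) g_fun y - (deriv ^^ n) g_fun (x + y))
          \<longrightarrow> c \<le> lam)"
      unfolding Let_def
    proof (intro conjI allI impI)
      fix x y :: real assume h: "0 < x \<and> 0 < y \<and> x + y \<le> pi"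
      have "(-1)^n * (2 * Fn n (pi/2) - Fn n pi) \<le> (-1)^n * (Fn n x + Fn n y - Fn n (x+y))"
        using h by (intro key) auto
      then show "2 / real (n + 2) * (2 ^ (n + 2) - 1)\<^sup>2 * \<bar>bernoulli_num (n + 2)\<bar> \<le> (deriv ^^ n) g_fun x + (deriv ^^ n) g_fun y - (deriv ^^ n) g_fun (x + y)"
        using h unfolding e val_even[OF ev] by (simp add: D)
    next
      fix c :: real
      assume "\<forall>x y. 0 < x \<and> 0 < y \<and> x + y \<le> pi \<longrightarrow>
            c \<le> (deriv ^^ n) g_fun x + (deriv ^^ n) g_fun y - (deriv ^^ n) g_fun (x + y)"
      then have "c \<le> (deriv ^^ n) g_fun (pi/2) + (deriv ^^ n) g_fun (pi/2) - (deriv ^^ n) g_fun (pi/2 + pi/2)"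
        by (meson divide_pos_pos pi_gt_zero zero_less_numeral order_refl ppi[THEN eq_refl])
      then show "c \<le> 2 / real (n + 2) * (2 ^ (n + 2) - 1)\<^sup>2 * \<bar>bernoulli_num (n + 2)\<bar>"
        unfolding ppi pi2 pi1 val_even[OF ev, symmetric] by simp
    qed
  next
    assume od: "odd n"
    have e: "(-1::real)^n = -1" using od by simp
    show "let mu = 2 * \<bar>euler_num (n + 1)\<bar> in
        (\<forall>x y. 0 < x \<and> 0 < y \<and> x + y \<le> pi \<longrightarrow>
            mu \<le> (deriv ^^ n) g_fun (x + y) - (deriv ^^ n) g_fun x - (deriv ^^ n) g_fun y) \<and>
        (\<forall>c. (\<forall>x y. 0 < x \<and> 0 < y \<and> x + y \<le> pi \<longrightarrow>
            c \<le> (deriv ^^ n) g_fun (x + y) - (deriv ^^ n) g_fun x - (deriv ^^ n) g_fun y)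
          \<longrightarrow> c \<le> mu)"
      unfolding Let_def
    proof (intro conjI allI impI)
      fix x y :: real assume h: "0 < x \<and> 0 < y \<and> x + y \<le> pi"
      have "(-1)^n * (2 * Fn n (pi/2) - Fn n pi) \<le> (-1)^n * (Fn n x + Fn n y - Fn n (x+y))"
        using h by (intro key) auto
      then have "- (2 * Fn n (pi/2) - Fn n pi) \<le> Fn n (x+y) - Fn n x - Fn n y"
        unfolding e by simp
      then show "2 * \<bar>euler_num (n + 1)\<bar> \<le> (deriv ^^ n) g_fun (x + y) - (deriv ^^ n) g_fun x - (deriv ^^ n) g_fun y"
        using h unfolding val_odd[OF od] by (simp add: D)
    next
      fix c :: real
      assume "\<forall>x y. 0 < x \<and> 0 < y \<and> x + y \<le> pi \<longrightarrow>
            c \<le> (deriv ^^ n) g_fun (x + y) - (deriv ^^ n) g_fun x - (deriv ^^ n) g_fun y"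
      then have "c \<le> (deriv ^^ n) g_fun (pi/2 + pi/2) - (deriv ^^ n) g_fun (pi/2) - (deriv ^^ n) g_fun (pi/2)"
        by (meson divide_pos_pos pi_gt_zero zero_less_numeral order_refl ppi[THEN eq_refl])
      then show "c \<le> 2 * \<bar>euler_num (n + 1)\<bar>"
        unfolding ppi pi2 pi1 val_odd[OF od, symmetric] by simp
    qed
  qed
qed


end
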